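(* Let $\alpha,\beta\in\mathbb{R}_{\ge1}$ be such that $\alpha/\beta$ is irrational. Then, as $T\to\infty$, \[ \mathbb{P}_T\big(\mathcal{N}_\alpha\cap\mathcal{N}_\beta\big) \sim \mathbb{P}_T\big(\mathcal{N}_\alpha\big)\mathbb{P}_T\big(\mathcal{N}_\beta\big). \]
   Context: $P^-(n)$ denotes the smallest prime factor of $n\in\mathbb{N}$, with $P^-(1)=\infty$. For $\alpha\ge1$, $\mathcal{N}_\alpha=\bigcup_{n\in\mathbb{N},\ P^-(n)>\alpha}(n\alpha-\tfrac12,n\alpha+\tfrac12)$. For $T>0$ and a Lebesgue-measurable set $\mathcal{S}\subseteq\mathbb{R}$, $\mathbb{P}_T(\mathcal{S})=\mathrm{meas}(\mathcal{S}\cap[0,T])/T$, where $\mathrm{meas}$ is Lebesgue measure. $f\sim g$ means $f/g\to1$. *)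

theory Defs
  imports "HOL-Analysis.Analysis" "HOL-Computational_Algebra.Primes" "HOL-Library.Landau_Symbols"
begin

text \<open>Smallest prime factor of n, with value infinity for n = 1 (and, by convention, for n = 0,
  which never matters since only n >= 1 is used).\<close>
definition Pminus :: "nat \<Rightarrow> ereal" where
  "Pminus n = (if n \<le> 1 then \<infinity> else ereal (real (Min (prime_factors n))))"

definition Nset :: "real \<Rightarrow> real set" where
  "Nset \<alpha> = (\<Union>n \<in> {n. n \<ge> 1 \<and> Pminus n > ereal \<alpha>}.
                {real n * \<alpha> - 1/2 <..< real n * \<alpha> + 1/2})"

definition PT :: "real \<Rightarrow> real set \<Rightarrow> real" where
  "PT T S = measure lebesgue (S \<inter> {0..T}) / T"

end

theory Submission
  imports Defs
begin

lemma dirichlet1: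
  fixes \<theta> :: real and N :: nat
  assumes "N > 0"
  obtains q p where "0 < q" "q \<le> int N" "\<bar>of_int q * \<theta> - of_int p\<bar> < 1 / N"
proof -
  have "\<exists>q p. 0<q \<and> q \<le> int N \<and> \<bar>of_int q * \<theta> - of_int p\<bar> < 1/N"
  proof (rule Dirichlet_approx_simult[OF assms, where \<theta>="\<lambda>_. \<theta>" and n=1])
    fix q :: int and p :: "nat \<Rightarrow> int" assume h: "0<q" "q \<le> int (N^1)" "\<And>i. i<1 \<Longrightarrow> \<bar>of_int q * \<theta> - of_int(p i)\<bar> < 1/N"
    have "\<bar>of_int q * \<theta> - of_int(p 0)\<bar> < 1/N" using h(3)[of 0] by simp
    then show "\<exists>q p. 0<q \<and> q \<le> int N \<and> \<bar>of_int q * \<theta> - of_int p\<bar> < 1/N"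
      using h(1,2) by auto
  qed
  then show ?thesis using that by blast
qed

lemma density:
  fixes A B \<epsilon> :: real
  assumes irr: "A / B \<notin> \<rat>" and B: "B > 0" and e: "\<epsilon> > 0"
  shows "\<exists>J::nat. \<forall>x::real. \<exists>j<J. \<exists>i::int. \<bar>x - real j * A - of_int i * B\<bar> \<le> \<epsilon>"
proof -
  obtain N :: nat where N: "N > B / \<epsilon>" using reals_Archimedean2 by blast
  have "B / \<epsilon> > 0" using B e by simp
  then have "real N > 0" using N by linarith
  then have Npos: "N > 0" by simp
  obtain q p where q: "0 < q" "q \<le> int N" and qp: "\<bar>of_int q * (A/B) - of_int p\<bar> < 1 / N"
    using dirichlet1[OF Npos] by blast
  define \<delta> where "\<delta> = of_int q * A - of_int p * B"
  have d1: "\<delta> = B * (of_int q * (A/B) - of_int p)" using B by (simp add: \<delta>_def field_simps)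
  have "\<bar>\<delta>\<bar> = B * \<bar>of_int q * (A/B) - of_int p\<bar>" using B unfolding d1 abs_mult by simp
  also have "\<dots> < B * (1 / N)" using mult_strict_left_mono[OF qp B] .
  also have "\<dots> = B / N" by simp
  also have "B / N < \<epsilon>" using N e Npos by (simp add: divide_less_eq mult.commute)
  finally have dle: "\<bar>\<delta>\<bar> < \<epsilon>" .
  have dnz: "\<delta> \<noteq> 0"
  proof
    assume "\<delta> = 0"
    then have "of_int q * A = of_int p * B" by (simp add: \<delta>_def)
    then have "A / B = of_int p / of_int q" using B q by (simp add: divide_eq_eq eq_divide_eq mult.commute)
    moreover have "(of_int p / of_int q :: real) \<in> \<rat>" by (intro Rats_divide Rats_of_int)
    ultimately show False using irr by simp
  qed
  define J where "J = nat q * (nat \<lceil>B / \<bar>\<delta>\<bar>\<rceil> + 1) + 1"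
  have "\<forall>x::real. \<exists>j<J. \<exists>i::int. \<bar>x - real j * A - of_int i * B\<bar> \<le> \<epsilon>"
  proof
    fix x :: real
    define y where "y = x - B * \<lfloor>x / B\<rfloor>"
    have f1: "of_int \<lfloor>x / B\<rfloor> \<le> x / B" "x / B < of_int \<lfloor>x / B\<rfloor> + 1" by linarith+
    have f2: "B * of_int \<lfloor>x / B\<rfloor> \<le> x" using mult_left_mono[OF f1(1), of B] B by simp
    have f3: "x < B * (of_int \<lfloor>x / B\<rfloor> + 1)" using mult_strict_left_mono[OF f1(2) B] B by simp
    have y: "0 \<le> y" "y < B" unfolding y_def using f2 f3 by (simp_all add: algebra_simps)
    define z where "z = (if \<delta> > 0 then y else y - B)"
    have zd: "z / \<delta> \<ge> 0" using y dnz by (auto simp: z_def divide_nonneg_pos divide_nonpos_neg)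
    have zB: "\<bar>z\<bar> \<le> B" using y by (auto simp: z_def)
    define k where "k = nat \<lfloor>z / \<delta>\<rfloor>"
    have k1: "real k \<le> z / \<delta>" "z / \<delta> < real k + 1" using zd by (auto simp: k_def)
    have "\<bar>z / \<delta> - k\<bar> < 1" using k1 by auto
    then have "\<bar>z / \<delta> - k\<bar> * \<bar>\<delta>\<bar> < \<bar>\<delta>\<bar>" using dnz by simp
    moreover have "(z / \<delta> - k) * \<delta> = z - k * \<delta>" using dnz by (simp add: algebra_simps)
    then have "\<bar>z / \<delta> - k\<bar> * \<bar>\<delta>\<bar> = \<bar>z - k * \<delta>\<bar>"
      by (metis abs_mult)
    ultimately have zk: "\<bar>z - k * \<delta>\<bar> < \<epsilon>" using dle by linarith
    have kle: "real k \<le> B / \<bar>\<delta>\<bar>"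
    proof -
      have "z / \<delta> = \<bar>z\<bar> / \<bar>\<delta>\<bar>" using zd
        by (metis abs_divide abs_of_nonneg)
      also have "\<dots> \<le> B / \<bar>\<delta>\<bar>" using zB by (simp add: divide_right_mono)
      finally show ?thesis using k1 by linarith
    qed
    have kle2: "k \<le> nat \<lceil>B / \<bar>\<delta>\<bar>\<rceil>" using kle by linarith
    define j where "j = nat q * k"
    define i where "i = \<lfloor>x / B\<rfloor> + (if \<delta> > 0 then 0 else 1) - int k * p"
    have "nat q * k \<le> nat q * nat \<lceil>B / \<bar>\<delta>\<bar>\<rceil>" by (rule mult_left_mono[OF kle2]) simp
    then have jJ: "j < J" unfolding j_def J_def distrib_left by linarith
    have rq: "real (nat q) = of_int q" using q by simp
    have rj: "real j = real k * of_int q" by (simp add: j_def rq)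
    have "x - real j * A - of_int i * B = z - k * \<delta>"
      unfolding rj i_def z_def y_def \<delta>_def by (cases "\<delta> > 0") (simp_all add: algebra_simps)
    then show "\<exists>j<J. \<exists>i::int. \<bar>x - real j * A - of_int i * B\<bar> \<le> \<epsilon>"
      using jJ zk by (intro exI[of _ j] conjI exI[of _ i]) auto
  qed
  then show ?thesis by blast
qed

definition Mav :: "(nat \<Rightarrow> real) \<Rightarrow> (real \<Rightarrow> real) \<Rightarrow> real \<Rightarrow> nat \<Rightarrow> real \<Rightarrow> real" where
  "Mav w G a N s = (\<Sum>n<N. w n * G (s + real n * a)) / real N"

definition Rie :: "(real \<Rightarrow> real) \<Rightarrow> real \<Rightarrow> nat \<Rightarrow> real \<Rightarrow> real" where
  "Rie G B R u = (\<Sum>r<R. G (u + real r * B / real R)) / real R"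

definition wav :: "(nat \<Rightarrow> real) \<Rightarrow> nat \<Rightarrow> real" where
  "wav w N = (\<Sum>n<N. w n) / real N"

lemma sum_split_add:
  fixes h :: "nat \<Rightarrow> real"
  shows "(\<Sum>n<N+P. h n) = (\<Sum>n<N. h n) + (\<Sum>n<P. h (N + n))"
  by (induction P) (simp_all add: algebra_simps)

lemma sum_shift_diff:
  fixes h :: "nat \<Rightarrow> real"
  shows "(\<Sum>n<N. h (n + P)) - (\<Sum>n<N. h n) = (\<Sum>n<P. h (n + N)) - (\<Sum>n<P. h n)"
proof -
  have "(\<Sum>n<N+P. h n) = (\<Sum>n<N. h n) + (\<Sum>n<P. h (N + n))" by (rule sum_split_add)
  moreover have "(\<Sum>n<P+N. h n) = (\<Sum>n<P. h n) + (\<Sum>n<N. h (P + n))" by (rule sum_split_add)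
  ultimately show ?thesis by (simp add: add.commute)
qed

lemma sum_abs_bound:
  fixes h :: "nat \<Rightarrow> real"
  assumes "\<And>n. \<bar>h n\<bar> \<le> C"
  shows "\<bar>\<Sum>n<P. h n\<bar> \<le> real P * C"
proof -
  have "\<bar>\<Sum>n<P. h n\<bar> \<le> (\<Sum>n<P. \<bar>h n\<bar>)" by (rule sum_abs)
  also have "\<dots> \<le> (\<Sum>n<P. C)" by (intro sum_mono assms)
  finally show ?thesis by simp
qed

lemma tri3: "\<bar>x - z\<bar> \<le> \<bar>x - y\<bar> + \<bar>y - (z::real)\<bar>" by linarith

lemma per_int:
  fixes G :: "real \<Rightarrow> real"
  assumes "\<And>x. G (x + B) = G x"
  shows "G (x + of_int i * B) = G x"
proof -
  have nat: "G (y + real m * B) = G y" for y m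
  proof (induction m)
    case 0 then show ?case by simp
  next
    case (Suc m)
    have "G (y + real (Suc m) * B) = G ((y + real m * B) + B)" by (simp add: algebra_simps)
    also have "\<dots> = G (y + real m * B)" by (rule assms)
    finally show ?case using Suc.IH by simp
  qed
  show ?thesis
  proof (cases "i \<ge> 0")
    case True
    then show ?thesis using nat[of x "nat i"] by simp
  next
    case False
    then have "x = (x + of_int i * B) + real (nat (-i)) * B" by simp
    then show ?thesis using nat[of "x + of_int i * B" "nat (-i)"] by metis
  qed
qed

context
  fixes w :: "nat \<Rightarrow> real" and G :: "real \<Rightarrow> real" and P :: nat and a B L C :: real
  assumes P: "P > 0" and wper: "\<And>n. w (n + P) = w n" and w0: "\<And>n. 0 \<le> w n" and w1: "\<And>n. w n \<le> 1"
    and B: "B > 0" and Gper: "\<And>x. G (x + B) = G x"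
    and Glip: "\<And>x y. \<bar>G x - G y\<bar> \<le> L * \<bar>x - y\<bar>" and L: "L \<ge> 0" and Gb: "\<And>x. \<bar>G x\<bar> \<le> C"
begin

lemma C0: "C \<ge> 0" using Gb[of 0] by linarith

lemma Mav_shift:
  assumes N: "N > 0"
  shows "\<bar>Mav w G a N (s + real P * a) - Mav w G a N s\<bar> \<le> 2 * real P * C / real N"
proof -
  define h where "h n = w n * G (s + real n * a)" for n
  have hb: "\<bar>h n\<bar> \<le> C" for n
  proof -
    have "\<bar>h n\<bar> = w n * \<bar>G (s + real n * a)\<bar>" using w0[of n] by (simp add: h_def abs_mult)
    also have "\<dots> \<le> 1 * C" using w0[of n] w1[of n] Gb C0 by (intro mult_mono) auto
    finally show ?thesis by simp
  qed
  have e1: "(\<Sum>n<N. w n * G (s + real P * a + real n * a)) = (\<Sum>n<N. h (n + P))"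
    unfolding h_def wper by (intro sum.cong) (simp_all add: algebra_simps)
  have "Mav w G a N (s + real P * a) - Mav w G a N s = ((\<Sum>n<N. h (n + P)) - (\<Sum>n<N. h n)) / real N"
    unfolding Mav_def e1 by (simp add: h_def diff_divide_distrib)
  also have "\<dots> = ((\<Sum>n<P. h (n + N)) - (\<Sum>n<P. h n)) / real N" by (simp add: sum_shift_diff)
  finally have eq: "\<bar>Mav w G a N (s + real P * a) - Mav w G a N s\<bar> = \<bar>(\<Sum>n<P. h (n + N)) - (\<Sum>n<P. h n)\<bar> / real N"
    by simp
  have "\<bar>(\<Sum>n<P. h (n + N)) - (\<Sum>n<P. h n)\<bar> \<le> \<bar>\<Sum>n<P. h (n + N)\<bar> + \<bar>\<Sum>n<P. h n\<bar>" by (rule abs_triangle_ineq4)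
  also have "\<dots> \<le> real P * C + real P * C" by (intro add_mono sum_abs_bound hb)
  finally have "\<bar>(\<Sum>n<P. h (n + N)) - (\<Sum>n<P. h n)\<bar> \<le> 2 * real P * C" by (simp add: algebra_simps)
  then show ?thesis unfolding eq by (rule divide_right_mono) simp
qed

lemma Mav_shift_iter:
  assumes N: "N > 0"
  shows "\<bar>Mav w G a N (s + real j * (real P * a)) - Mav w G a N s\<bar> \<le> real j * (2 * real P * C / real N)"
proof (induction j)
  case 0
  then show ?case by simp
next
  case (Suc j)
  have eqs: "s + real (Suc j) * (real P * a) = s + real j * (real P * a) + real P * a"
    by (simp add: algebra_simps)
  have "\<bar>Mav w G a N (s + real (Suc j) * (real P * a)) - Mav w G a N (s + real j * (real P * a))\<bar>
        \<le> 2 * real P * C / real N" unfolding eqs by (rule Mav_shift[OF N])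
  then show ?case using Suc.IH tri3[of "Mav w G a N (s + real (Suc j) * (real P * a))" "Mav w G a N s" "Mav w G a N (s + real j * (real P * a))"]
    by (simp add: algebra_simps add_divide_distrib)
qed

lemma Mav_per: "Mav w G a N (s + of_int i * B) = Mav w G a N s"
proof -
  have "G (s + of_int i * B + real n * a) = G (s + real n * a)" for n
    using per_int[where G=G and B=B, OF Gper, of "s + real n * a" i] by (simp add: algebra_simps)
  then show ?thesis unfolding Mav_def by simp
qed

lemma Mav_lip:
  assumes N: "N > 0"
  shows "\<bar>Mav w G a N s - Mav w G a N t\<bar> \<le> L * \<bar>s - t\<bar>"
proof -
  have "\<bar>(\<Sum>n<N. w n * G (s + real n * a)) - (\<Sum>n<N. w n * G (t + real n * a))\<bar>
        = \<bar>\<Sum>n<N. w n * (G (s + real n * a) - G (t + real n * a))\<bar>"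
    by (simp add: sum_subtractf algebra_simps)
  also have "\<dots> \<le> (\<Sum>n<N. \<bar>w n * (G (s + real n * a) - G (t + real n * a))\<bar>)" by (rule sum_abs)
  also have "\<dots> \<le> (\<Sum>n<N. L * \<bar>s - t\<bar>)"
  proof (intro sum_mono)
    fix n
    have "\<bar>w n * (G (s + real n * a) - G (t + real n * a))\<bar> = w n * \<bar>G (s + real n * a) - G (t + real n * a)\<bar>"
      using w0[of n] by (simp add: abs_mult)
    also have "\<dots> \<le> 1 * (L * \<bar>s - t\<bar>)"
      using Glip[of "s + real n * a" "t + real n * a"] w0[of n] w1[of n] L
      by (intro mult_mono) auto
    finally show "\<bar>w n * (G (s + real n * a) - G (t + real n * a))\<bar> \<le> L * \<bar>s - t\<bar>" by simp
  qed
  also have "\<dots> = real N * (L * \<bar>s - t\<bar>)" by simp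
  finally show ?thesis unfolding Mav_def using N
    by (simp add: diff_divide_distrib[symmetric] divide_le_eq mult.commute)
qed


lemma Mav_unif:
  assumes irr: "(real P * a) / B \<notin> \<rat>" and e: "\<epsilon> > 0"
  shows "\<exists>N0>0. \<forall>N\<ge>N0. \<forall>s t. \<bar>Mav w G a N s - Mav w G a N t\<bar> \<le> \<epsilon>"
proof -
  define e' where "e' = \<epsilon> / (2 * (L + 1))"
  have e': "e' > 0" using e L by (simp add: e'_def)
  have "L * \<epsilon> \<le> (L + 1) * \<epsilon>" using e by (simp add: algebra_simps)
  then have "L * \<epsilon> / (2 * (L + 1)) \<le> (L + 1) * \<epsilon> / (2 * (L + 1))" using L
    by (intro divide_right_mono) auto
  also have "\<dots> = \<epsilon> / 2"
  proof -
    have h: "L + 1 \<noteq> 0" "2 * L + 2 \<noteq> 0" "2 * (L + 1) \<noteq> 0" using L by auto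
    show ?thesis using h by (simp add: field_simps)
  qed
  finally have Le': "L * e' \<le> \<epsilon> / 2" by (simp add: e'_def)
  obtain J where J: "\<forall>x. \<exists>j<J. \<exists>i::int. \<bar>x - real j * (real P * a) - of_int i * B\<bar> \<le> e'"
    using density[OF irr B e'] by blast
  define N0 where "N0 = nat \<lceil>4 * real J * real P * C / \<epsilon>\<rceil> + 1"
  have "\<forall>N\<ge>N0. \<forall>s t. \<bar>Mav w G a N s - Mav w G a N t\<bar> \<le> \<epsilon>"
  proof (intro allI impI)
    fix N s t assume NN0: "N \<ge> N0"
    then have N: "N > 0" unfolding N0_def by simp
    have "4 * real J * real P * C / \<epsilon> \<le> real N" using NN0 unfolding N0_def by linarith
    then have "4 * real J * real P * C \<le> real N * \<epsilon>" using e by (simp add: divide_le_eq)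
    then have JN: "real J * (2 * real P * C / real N) \<le> \<epsilon> / 2" using N
      by (simp add: field_simps)
    obtain j i where ji: "j < J" "\<bar>(s - t) - real j * (real P * a) - of_int i * B\<bar> \<le> e'"
      using J by blast
    define t' where "t' = t + real j * (real P * a)"
    have "\<bar>Mav w G a N s - Mav w G a N (t' + of_int i * B)\<bar> \<le> L * \<bar>s - (t' + of_int i * B)\<bar>"
      by (rule Mav_lip[OF N])
    also have "\<dots> \<le> L * e'" using ji(2) L unfolding t'_def by (intro mult_left_mono) (auto simp: algebra_simps)
    finally have 1: "\<bar>Mav w G a N s - Mav w G a N t'\<bar> \<le> \<epsilon> / 2" using Le' Mav_per by simp
    have "\<bar>Mav w G a N t' - Mav w G a N t\<bar> \<le> real j * (2 * real P * C / real N)"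
      unfolding t'_def by (rule Mav_shift_iter[OF N])
    also have "\<dots> \<le> real J * (2 * real P * C / real N)" using ji(1) C0
      by (intro mult_right_mono) auto
    finally have 2: "\<bar>Mav w G a N t' - Mav w G a N t\<bar> \<le> \<epsilon> / 2" using JN by linarith
    show "\<bar>Mav w G a N s - Mav w G a N t\<bar> \<le> \<epsilon>" using 1 2 tri3[of "Mav w G a N s" "Mav w G a N t" "Mav w G a N t'"]
      by linarith
  qed
  then show ?thesis unfolding N0_def by (intro exI[of _ N0]) (simp add: N0_def)
qed

lemma Mav_swap:
  "(\<Sum>r<R. Mav w G a N (t + real r * B / real R)) / real R = (\<Sum>n<N. w n * Rie G B R (t + real n * a)) / real N"
proof -
  have "(\<Sum>r<R. Mav w G a N (t + real r * B / real R)) = (\<Sum>r<R. \<Sum>n<N. w n * G (t + real n * a + real r * B / real R)) / real N"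
    by (simp add: Mav_def sum_divide_distrib ac_simps)
  moreover have "(\<Sum>n<N. w n * Rie G B R (t + real n * a)) = (\<Sum>n<N. \<Sum>r<R. w n * G (t + real n * a + real r * B / real R)) / real R"
    by (simp add: Rie_def sum_distrib_left sum_divide_distrib)
  ultimately show ?thesis by (simp add: sum.swap[of _ "{..<R}"] field_simps)
qed

end

context
  fixes G :: "real \<Rightarrow> real" and B L C :: real
  assumes B: "B > 0" and Gper: "\<And>x. G (x + B) = G x"
    and Glip: "\<And>x y. \<bar>G x - G y\<bar> \<le> L * \<bar>x - y\<bar>" and L: "L \<ge> 0" and Gb: "\<And>x. \<bar>G x\<bar> \<le> C"
begin

lemma Rie_Mav: "Rie G B R u = Mav (\<lambda>_. 1) G (B / real R) R u"
  by (simp add: Rie_def Mav_def)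

lemma Rie_lip: "R > 0 \<Longrightarrow> \<bar>Rie G B R u - Rie G B R v\<bar> \<le> L * \<bar>u - v\<bar>"
  unfolding Rie_Mav
  by (rule Mav_lip[where w="\<lambda>_. 1" and P=1 and B=B and C=C]) (use B Gper Glip L Gb in auto)

lemma Rie_bound: "\<bar>Rie G B R u\<bar> \<le> C"
proof (cases "R = 0")
  case True
  then show ?thesis using Gb[of 0] by (simp add: Rie_def)
next
  case False
  have "\<bar>\<Sum>r<R. G (u + real r * B / real R)\<bar> \<le> real R * C" by (rule sum_abs_bound) (rule Gb)
  then show ?thesis using False by (simp add: Rie_def divide_le_eq mult.commute)
qed

lemma Rie_step:
  assumes R: "R > 0"
  shows "Rie G B R (u + B / real R) = Rie G B R u"
proof -
  define g where "g r = G (u + real r * B / real R)" for r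
  have gR: "g R = g 0" using R Gper[of u] by (simp add: g_def)
  have "(\<Sum>r<Suc R. g r) = g 0 + (\<Sum>r<R. g (Suc r))" by (rule sum.lessThan_Suc_shift)
  moreover have "(\<Sum>r<Suc R. g r) = (\<Sum>r<R. g r) + g R" by simp
  ultimately have "(\<Sum>r<R. g (Suc r)) = (\<Sum>r<R. g r)" using gR by simp
  moreover have "G (u + B / real R + real r * B / real R) = g (Suc r)" for r
    unfolding g_def by (simp add: add_divide_distrib algebra_simps)
  ultimately show ?thesis unfolding Rie_def by (simp add: g_def)
qed

lemma Rie_near_const:
  assumes R: "R > 0"
  shows "\<bar>Rie G B R u - Rie G B R v\<bar> \<le> L * B / real R"
proof -
  define d where "d = B / real R"
  have d: "d > 0" using B R by (simp add: d_def)
  define m where "m = \<lfloor>(u - v) / d\<rfloor>"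
  have m1: "of_int m \<le> (u - v) / d" "(u - v) / d < of_int m + 1" unfolding m_def by linarith+
  have m2: "of_int m * d \<le> u - v" using mult_right_mono[OF m1(1), of d] d by simp
  have m3: "u - v < (of_int m + 1) * d" using mult_strict_right_mono[OF m1(2) d] d by simp
  define u' where "u' = u - of_int m * d"
  have uu: "Rie G B R u = Rie G B R u'"
    using per_int[where G="Rie G B R" and B=d, OF Rie_step[OF R, folded d_def], of u' m]
    by (simp add: u'_def)
  have "\<bar>u' - v\<bar> \<le> d" using m2 m3 unfolding u'_def by (simp add: algebra_simps)
  then have "\<bar>Rie G B R u' - Rie G B R v\<bar> \<le> L * d"
    using Rie_lip[OF R, of u' v] L by (meson mult_left_mono order_trans)
  then show ?thesis using uu by (simp add: d_def)
qed

end

context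
  fixes w :: "nat \<Rightarrow> real" and G :: "real \<Rightarrow> real" and P :: nat and a B L C :: real
  assumes P: "P > 0" and wper: "\<And>n. w (n + P) = w n" and w0: "\<And>n. 0 \<le> w n" and w1: "\<And>n. w n \<le> 1"
    and B: "B > 0" and Gper: "\<And>x. G (x + B) = G x"
    and Glip: "\<And>x y. \<bar>G x - G y\<bar> \<le> L * \<bar>x - y\<bar>" and L: "L \<ge> 0" and Gb: "\<And>x. \<bar>G x\<bar> \<le> C"
begin

lemma Rie_avg:
  assumes N: "N > 0" and R: "R > 0"
  shows "\<bar>(\<Sum>n<N. w n * Rie G B R (t + real n * a)) / real N - wav w N * Rie G B R 0\<bar> \<le> L * B / real R"
proof -
  have "(\<Sum>n<N. w n * Rie G B R (t + real n * a)) / real N - wav w N * Rie G B R 0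
        = (\<Sum>n<N. w n * (Rie G B R (t + real n * a) - Rie G B R 0)) / real N"
    by (simp add: wav_def sum_distrib_right sum_subtractf algebra_simps diff_divide_distrib)
  moreover have "\<bar>\<Sum>n<N. w n * (Rie G B R (t + real n * a) - Rie G B R 0)\<bar> \<le> real N * (L * B / real R)"
  proof -
    have "\<bar>\<Sum>n<N. w n * (Rie G B R (t + real n * a) - Rie G B R 0)\<bar>
          \<le> (\<Sum>n<N. \<bar>w n * (Rie G B R (t + real n * a) - Rie G B R 0)\<bar>)" by (rule sum_abs)
    also have "\<dots> \<le> (\<Sum>n<N. L * B / real R)"
    proof (intro sum_mono)
      fix n
      have "\<bar>w n * (Rie G B R (t + real n * a) - Rie G B R 0)\<bar> = w n * \<bar>Rie G B R (t + real n * a) - Rie G B R 0\<bar>"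
        using w0[of n] by (simp add: abs_mult)
      also have "\<dots> \<le> 1 * (L * B / real R)"
        using Rie_near_const[OF B Gper Glip L Gb R, of "t + real n * a" 0] w0[of n] w1[of n] L B
        by (intro mult_mono) auto
      finally show "\<bar>w n * (Rie G B R (t + real n * a) - Rie G B R 0)\<bar> \<le> L * B / real R" by simp
    qed
    finally show ?thesis by simp
  qed
  ultimately show ?thesis using N by (simp add: divide_le_eq mult.commute)
qed

lemma Mav_vs_Rie:
  assumes unif: "\<forall>s t. \<bar>Mav w G a N s - Mav w G a N t\<bar> \<le> \<epsilon>" and N: "N > 0" and R: "R > 0"
  shows "\<bar>Mav w G a N t - wav w N * Rie G B R 0\<bar> \<le> \<epsilon> + L * B / real R"
proof -
  define avg where "avg = (\<Sum>r<R. Mav w G a N (t + real r * B / real R)) / real R"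
  have "Mav w G a N t - avg = (\<Sum>r<R. Mav w G a N t - Mav w G a N (t + real r * B / real R)) / real R"
    using R by (simp add: avg_def sum_subtractf diff_divide_distrib)
  moreover have "\<bar>\<Sum>r<R. Mav w G a N t - Mav w G a N (t + real r * B / real R)\<bar> \<le> real R * \<epsilon>"
    by (rule sum_abs_bound) (use unif in blast)
  ultimately have 1: "\<bar>Mav w G a N t - avg\<bar> \<le> \<epsilon>" using R by (simp add: divide_le_eq mult.commute)
  have 2: "\<bar>avg - wav w N * Rie G B R 0\<bar> \<le> L * B / real R"
    unfolding avg_def Mav_swap[where w=w and G=G and P=P and B=B and L=L and C=C, OF P wper w0 w1 B Gper Glip L Gb] by (rule Rie_avg[OF N R])
  show ?thesis using 1 2 tri3[of "Mav w G a N t" "wav w N * Rie G B R 0" avg] by linarith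
qed

end

lemma weyl_key:
  fixes w :: "nat \<Rightarrow> real" and G :: "real \<Rightarrow> real" and P :: nat and a B L C :: real
  assumes P: "P > 0" and wper: "\<And>n. w (n + P) = w n" and w0: "\<And>n. 0 \<le> w n" and w1: "\<And>n. w n \<le> 1"
    and B: "B > 0" and Gper: "\<And>x. G (x + B) = G x"
    and Glip: "\<And>x y. \<bar>G x - G y\<bar> \<le> L * \<bar>x - y\<bar>" and L: "L \<ge> 0" and Gb: "\<And>x. \<bar>G x\<bar> \<le> C"
    and irr: "(real P * a) / B \<notin> \<rat>" and e: "\<epsilon> > 0"
  shows "\<exists>N0>0. \<forall>N\<ge>N0. \<forall>R>0. \<forall>t. \<bar>Mav w G a N t - wav w N * Rie G B R 0\<bar> \<le> \<epsilon> + L * B / real R"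
proof -
  obtain N0 where N0: "N0 > 0" "\<forall>N\<ge>N0. \<forall>s t. \<bar>Mav w G a N s - Mav w G a N t\<bar> \<le> \<epsilon>"
    using Mav_unif[where w=w and G=G and P=P and a=a and B=B and L=L and C=C, OF P wper w0 w1 B Gper Glip L Gb irr e] by blast
  show ?thesis
  proof (intro exI[of _ N0] conjI allI impI)
    fix N R t assume "N0 \<le> N" "(0::nat) < R"
    then show "\<bar>Mav w G a N t - wav w N * Rie G B R 0\<bar> \<le> \<epsilon> + L * B / real R"
      using Mav_vs_Rie[where w=w and G=G and P=P and a=a and B=B and L=L and C=C, OF P wper w0 w1 B Gper Glip L Gb, of N \<epsilon> R t] N0 by simp
  qed (use N0 in simp)
qed

lemma arch_RB:
  fixes K e :: real assumes "e > 0"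
  shows "\<exists>R1>0. \<forall>R\<ge>R1. K / real R \<le> e"
proof -
  define R1 where "R1 = nat \<lceil>K / e\<rceil> + 1"
  have "\<forall>R\<ge>R1. K / real R \<le> e"
  proof (intro allI impI)
    fix R assume R: "R \<ge> R1"
    then have "K / e \<le> real R" unfolding R1_def by linarith
    moreover have "R > 0" using R unfolding R1_def by simp
    ultimately show "K / real R \<le> e" using assms by (simp add: divide_le_eq mult.commute)
  qed
  then show ?thesis unfolding R1_def by (intro exI[of _ R1]) (auto simp: R1_def)
qed

theorem weyl:
  fixes w :: "nat \<Rightarrow> real" and G :: "real \<Rightarrow> real" and P :: nat and a B L C :: real
  assumes P: "P > 0" and wper: "\<And>n. w (n + P) = w n" and w0: "\<And>n. 0 \<le> w n" and w1: "\<And>n. w n \<le> 1"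
    and B: "B > 0" and Gper: "\<And>x. G (x + B) = G x"
    and Glip: "\<And>x y. \<bar>G x - G y\<bar> \<le> L * \<bar>x - y\<bar>" and L: "L \<ge> 0" and Gb: "\<And>x. \<bar>G x\<bar> \<le> C"
    and irr: "(real P * a) / B \<notin> \<rat>"
  shows "convergent (\<lambda>R. Rie G B R 0)"
    and "(\<lambda>N. Mav w G a N t - wav w N * lim (\<lambda>R. Rie G B R 0)) \<longlonglongrightarrow> 0"
proof -
  have key1: "\<exists>N0>0. \<forall>N\<ge>N0. \<forall>R>0. \<forall>t. \<bar>Mav (\<lambda>_. 1) G a N t - wav (\<lambda>_. 1) N * Rie G B R 0\<bar> \<le> \<epsilon> + L * B / real R"
    if "\<epsilon> > 0" for \<epsilon>
    by (rule weyl_key[OF P _ _ _ B Gper Glip L Gb irr that]) auto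
  have "Cauchy (\<lambda>R. Rie G B R 0)"
  proof (rule CauchyI)
    fix e :: real assume e: "0 < e"
    obtain N0 where N0: "N0 > 0" "\<forall>N\<ge>N0. \<forall>R>0. \<forall>t. \<bar>Mav (\<lambda>_. 1) G a N t - wav (\<lambda>_. 1) N * Rie G B R 0\<bar> \<le> e/5 + L * B / real R"
      using key1[of "e/5"] e by auto
    have wv: "wav (\<lambda>_. 1) N0 = 1" using N0(1) by (simp add: wav_def)
    obtain R1 where R1: "R1 > 0" "\<forall>R\<ge>R1. L * B / real R \<le> e/5" using arch_RB[of "e/5" "L * B"] e by auto
    have "\<forall>m\<ge>R1. \<forall>n\<ge>R1. norm (Rie G B m 0 - Rie G B n 0) < e"
    proof (intro allI impI)
      fix m n assume m: "m \<ge> R1" and n: "n \<ge> R1"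
      have a1: "\<bar>Mav (\<lambda>_. 1) G a N0 0 - wav (\<lambda>_. 1) N0 * Rie G B m 0\<bar> \<le> e/5 + L * B / real m"
        using N0(2) m R1(1) by auto
      have a2: "L * B / real m \<le> e/5" using R1(2) m by auto
      have 1: "\<bar>Mav (\<lambda>_. 1) G a N0 0 - Rie G B m 0\<bar> \<le> e/5 + e/5"
        using a1 a2 unfolding wv mult_1 by linarith
      have a1: "\<bar>Mav (\<lambda>_. 1) G a N0 0 - wav (\<lambda>_. 1) N0 * Rie G B n 0\<bar> \<le> e/5 + L * B / real n"
        using N0(2) n R1(1) by auto
      have a2: "L * B / real n \<le> e/5" using R1(2) n by auto
      have 2: "\<bar>Mav (\<lambda>_. 1) G a N0 0 - Rie G B n 0\<bar> \<le> e/5 + e/5"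
        using a1 a2 unfolding wv mult_1 by linarith
      show "norm (Rie G B m 0 - Rie G B n 0) < e" unfolding real_norm_def using 1 2 e tri3[of "Rie G B m 0" "Rie G B n 0" "Mav (\<lambda>_. 1) G a N0 0"] abs_minus_commute[of "Mav (\<lambda>_. 1) G a N0 0" "Rie G B m 0"] by linarith
    qed
    then show "\<exists>M. \<forall>m\<ge>M. \<forall>n\<ge>M. norm (Rie G B m 0 - Rie G B n 0) < e" by blast
  qed
  then show conv: "convergent (\<lambda>R. Rie G B R 0)" by (simp add: Cauchy_convergent_iff)
  define \<mu> where "\<mu> = lim (\<lambda>R. Rie G B R 0)"
  have lim\<mu>: "(\<lambda>R. Rie G B R 0) \<longlonglongrightarrow> \<mu>" using conv by (simp add: convergent_LIMSEQ_iff \<mu>_def)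
  show "(\<lambda>N. Mav w G a N t - wav w N * lim (\<lambda>R. Rie G B R 0)) \<longlonglongrightarrow> 0"
    unfolding \<mu>_def[symmetric]
  proof (rule LIMSEQ_I)
    fix r :: real assume r: "0 < r"
    obtain N0 where N0: "N0 > 0" "\<forall>N\<ge>N0. \<forall>R>0. \<forall>t. \<bar>Mav w G a N t - wav w N * Rie G B R 0\<bar> \<le> r/4 + L * B / real R"
      using weyl_key[where w=w and G=G and P=P and a=a and B=B and L=L and C=C and \<epsilon>="r/4", OF P wper w0 w1 B Gper Glip L Gb irr] r by auto
    obtain R1 where R1: "R1 > 0" "\<forall>R\<ge>R1. L * B / real R \<le> r/4" using arch_RB[of "r/4" "L * B"] r by auto
    have "\<forall>N\<ge>N0. norm (Mav w G a N t - wav w N * \<mu> - 0) < r"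
    proof (intro allI impI)
      fix N assume N: "N \<ge> N0"
      have tl: "(\<lambda>R. \<bar>Mav w G a N t - wav w N * Rie G B R 0\<bar>) \<longlonglongrightarrow> \<bar>Mav w G a N t - wav w N * \<mu>\<bar>"
        by (intro tendsto_intros lim\<mu>)
      have "\<forall>R\<ge>R1. \<bar>Mav w G a N t - wav w N * Rie G B R 0\<bar> \<le> r/4 + r/4"
      proof (intro allI impI)
        fix R assume R: "R \<ge> R1"
        then have "R > 0" using R1 by simp
        then show "\<bar>Mav w G a N t - wav w N * Rie G B R 0\<bar> \<le> r/4 + r/4"
        proof -
          have a1: "\<bar>Mav w G a N t - wav w N * Rie G B R 0\<bar> \<le> r/4 + L * B / real R"
            using N0(2) N \<open>R > 0\<close> by auto
          have a2: "L * B / real R \<le> r/4" using R1(2) R by auto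
          show ?thesis using a1 a2 by linarith
        qed
      qed
      then have "\<bar>Mav w G a N t - wav w N * \<mu>\<bar> \<le> r/4 + r/4"
        by (intro LIMSEQ_le_const2[OF tl]) blast
      then show "norm (Mav w G a N t - wav w N * \<mu> - 0) < r" using r by simp
    qed
    then show "\<exists>no. \<forall>N\<ge>no. norm (Mav w G a N t - wav w N * \<mu> - 0) < r" by blast
  qed
qed

definition Pp :: "real \<Rightarrow> nat" where "Pp \<gamma> = \<Prod>{p. prime p \<and> real p \<le> \<gamma>}"

lemma Pp_fin: "finite {p::nat. prime p \<and> real p \<le> \<gamma>}"
proof (rule finite_subset)
  show "{p::nat. prime p \<and> real p \<le> \<gamma>} \<subseteq> {..nat \<lfloor>\<gamma>\<rfloor>}" by (auto simp: le_nat_floor)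
qed simp

lemma Pp_pos: "Pp \<gamma> > 0"
  unfolding Pp_def by (rule prod_pos) (auto simp: prime_gt_0_nat)

lemma coprime_Pp: "coprime n (Pp \<gamma>) \<longleftrightarrow> (\<forall>p. prime p \<and> real p \<le> \<gamma> \<longrightarrow> \<not> p dvd n)"
proof
  assume c: "coprime n (Pp \<gamma>)"
  show "\<forall>p. prime p \<and> real p \<le> \<gamma> \<longrightarrow> \<not> p dvd n"
  proof (intro allI impI notI)
    fix p assume p: "prime p \<and> real p \<le> \<gamma>" and d: "p dvd n"
    have "p dvd Pp \<gamma>" unfolding Pp_def using p Pp_fin by (intro dvd_prodI) auto
    then have "is_unit p" using coprime_common_divisor[OF c d] by simp
    then show False using p by auto
  qed
next
  assume h: "\<forall>p. prime p \<and> real p \<le> \<gamma> \<longrightarrow> \<not> p dvd n"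
  show "coprime n (Pp \<gamma>)" unfolding Pp_def
  proof (rule prod_coprime_right)
    fix p assume "p \<in> {p. prime p \<and> real p \<le> \<gamma>}"
    then show "coprime n p" using h prime_imp_coprime[of p n] by (auto simp: coprime_commute)
  qed
qed

lemma adm:
  assumes "n \<ge> 1"
  shows "Pminus n > ereal \<gamma> \<longleftrightarrow> coprime n (Pp \<gamma>)"
proof (cases "n = 1")
  case True
  then show ?thesis by (simp add: Pminus_def)
next
  case False
  then have n2: "n > 1" using assms by simp
  obtain p0 where p0: "prime p0" "p0 dvd n" using prime_factor_nat[of n] n2 by auto
  have "p0 \<in> prime_factors n" using p0 n2 by (simp add: in_prime_factors_iff)
  then have ne: "prime_factors n \<noteq> {}" by blast
  have "Pminus n > ereal \<gamma> \<longleftrightarrow> real (Min (prime_factors n)) > \<gamma>" using n2 by (simp add: Pminus_def)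
  also have "\<dots> \<longleftrightarrow> (\<forall>p\<in>prime_factors n. real p > \<gamma>)"
  proof
    assume h: "real (Min (prime_factors n)) > \<gamma>"
    show "\<forall>p\<in>prime_factors n. real p > \<gamma>"
    proof
      fix p assume "p \<in> prime_factors n"
      then have "Min (prime_factors n) \<le> p" by simp
      then show "real p > \<gamma>" using h by linarith
    qed
  next
    assume "\<forall>p\<in>prime_factors n. real p > \<gamma>"
    then show "real (Min (prime_factors n)) > \<gamma>" using Min_in[OF _ ne] by simp
  qed
  also have "\<dots> \<longleftrightarrow> (\<forall>p. prime p \<and> p dvd n \<longrightarrow> real p > \<gamma>)"
    unfolding Ball_def in_prime_factors_iff using n2 by auto
  also have "\<dots> \<longleftrightarrow> (\<forall>p. prime p \<and> real p \<le> \<gamma> \<longrightarrow> \<not> p dvd n)"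
    by (meson not_le)
  also have "\<dots> \<longleftrightarrow> coprime n (Pp \<gamma>)" by (simp add: coprime_Pp)
  finally show ?thesis .
qed

lemma ival_iff: "x \<in> {c - 1/2<..<c + 1/2} \<longleftrightarrow> \<bar>x - c\<bar> < 1/2" for x c :: real
  unfolding greaterThanLessThan_iff abs_less_iff by auto

lemma Nset_iff: "x \<in> Nset \<gamma> \<longleftrightarrow> (\<exists>n::nat. n \<ge> 1 \<and> coprime n (Pp \<gamma>) \<and> \<bar>x - real n * \<gamma>\<bar> < 1/2)"
proof -
  have "x \<in> Nset \<gamma> \<longleftrightarrow> (\<exists>n::nat. n \<ge> 1 \<and> Pminus n > ereal \<gamma> \<and> \<bar>x - real n * \<gamma>\<bar> < 1/2)"
    unfolding Nset_def UN_iff Bex_def mem_Collect_eq ival_iff by blast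
  also have "\<dots> \<longleftrightarrow> (\<exists>n::nat. n \<ge> 1 \<and> coprime n (Pp \<gamma>) \<and> \<bar>x - real n * \<gamma>\<bar> < 1/2)"
    using adm by auto
  finally show ?thesis .
qed

definition Nper :: "real \<Rightarrow> real set" where
  "Nper \<gamma> = {x. \<exists>n::int. coprime n (int (Pp \<gamma>)) \<and> \<bar>x - of_int n * \<gamma>\<bar> < 1/2}"

lemma open_Nset: "open (Nset \<gamma>)"
  unfolding Nset_def by (intro open_UN ballI open_greaterThanLessThan)

lemma open_Nper: "open (Nper \<gamma>)"
proof -
  have "Nper \<gamma> = (\<Union>n\<in>{n::int. coprime n (int (Pp \<gamma>))}. {of_int n * \<gamma> - 1/2 <..< of_int n * \<gamma> + 1/2})"
    unfolding Nper_def apply (rule set_eqI) apply (unfold mem_Collect_eq UN_iff Bex_def ival_iff) by blast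
  then show ?thesis by (simp add: open_UN)
qed

lemma Nset_Nper:
  assumes g: "\<gamma> \<ge> 1" and x: "x \<ge> 1/2"
  shows "x \<in> Nset \<gamma> \<longleftrightarrow> x \<in> Nper \<gamma>"
proof
  assume "x \<in> Nset \<gamma>"
  then obtain n :: nat where n: "coprime n (Pp \<gamma>)" "\<bar>x - real n * \<gamma>\<bar> < 1/2" unfolding Nset_iff by blast
  then show "x \<in> Nper \<gamma>" unfolding Nper_def by (intro CollectI exI[of _ "int n"]) simp
next
  assume "x \<in> Nper \<gamma>"
  then obtain n :: int where n: "coprime n (int (Pp \<gamma>))" "\<bar>x - of_int n * \<gamma>\<bar> < 1/2" unfolding Nper_def by blast
  have "of_int n * \<gamma> > 0" using n(2) x unfolding abs_less_iff by linarith
  then have "n > 0" using g by (simp add: zero_less_mult_iff)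
  then have nn: "n = int (nat n)" "nat n \<ge> 1" by auto
  have "coprime (nat n) (Pp \<gamma>)" using n(1) nn(1) by (metis coprime_int_iff)
  moreover have "\<bar>x - real (nat n) * \<gamma>\<bar> < 1/2" using n(2) nn(1) by (metis of_int_of_nat_eq)
  ultimately show "x \<in> Nset \<gamma>" unfolding Nset_iff using nn(2) by blast
qed

lemma Nper_per: "x + real (Pp \<gamma>) * \<gamma> \<in> Nper \<gamma> \<longleftrightarrow> x \<in> Nper \<gamma>"
proof
  assume "x + real (Pp \<gamma>) * \<gamma> \<in> Nper \<gamma>"
  then obtain n :: int where n: "coprime n (int (Pp \<gamma>))" "\<bar>x + real (Pp \<gamma>) * \<gamma> - of_int n * \<gamma>\<bar> < 1/2"
    unfolding Nper_def by blast
  have "coprime (n - int (Pp \<gamma>)) (int (Pp \<gamma>))" using n(1)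
    by (metis coprime_iff_gcd_eq_1 diff_add_cancel gcd_add1)
  moreover have "\<bar>x - of_int (n - int (Pp \<gamma>)) * \<gamma>\<bar> < 1/2" using n(2) by (simp add: algebra_simps)
  ultimately show "x \<in> Nper \<gamma>" unfolding Nper_def by blast
next
  assume "x \<in> Nper \<gamma>"
  then obtain n :: int where n: "coprime n (int (Pp \<gamma>))" "\<bar>x - of_int n * \<gamma>\<bar> < 1/2"
    unfolding Nper_def by blast
  have "coprime (n + int (Pp \<gamma>)) (int (Pp \<gamma>))" using n(1)
    by (metis coprime_iff_gcd_eq_1 gcd_add1)
  moreover have "\<bar>x + real (Pp \<gamma>) * \<gamma> - of_int (n + int (Pp \<gamma>)) * \<gamma>\<bar> < 1/2" using n(2) by (simp add: algebra_simps)
  ultimately show "x + real (Pp \<gamma>) * \<gamma> \<in> Nper \<gamma>" unfolding Nper_def by blast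
qed

lemma ind_integrable:
  fixes a b :: real
  assumes "open S"
  shows "(indicator S :: real \<Rightarrow> real) integrable_on {a..b}"
proof -
  have "S \<inter> {a<..<b} \<in> lmeasurable"
    by (rule lmeasurable_open) (use assms in auto)
  then have "(\<lambda>x. 1::real) integrable_on (S \<inter> {a<..<b})" by (simp add: lmeasurable_iff_integrable_on)
  then have "(\<lambda>x. if x \<in> S then 1::real else 0) integrable_on {a<..<b}" by (simp add: integrable_restrict_Int)
  then have "(indicator S :: real \<Rightarrow> real) integrable_on {a<..<b}" by (rule integrable_eq) (simp add: indicator_def)
  then show ?thesis by (simp add: integrable_on_open_interval_real)
qed

lemma window_mem:
  assumes g: "\<gamma> \<ge> 1" and k: "k \<ge> 1" and x: "real k * \<gamma> - 1/2 \<le> x" "x \<le> real (Suc k) * \<gamma> - 1/2"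
  shows "x \<in> Nset \<gamma> \<longleftrightarrow> coprime k (Pp \<gamma>) \<and> \<bar>x - real k * \<gamma>\<bar> < 1/2"
proof
  assume "x \<in> Nset \<gamma>"
  then obtain m where m: "m \<ge> 1" "coprime m (Pp \<gamma>)" "\<bar>x - real m * \<gamma>\<bar> < 1/2" unfolding Nset_iff by blast
  have "m = k"
  proof (rule ccontr)
    assume "m \<noteq> k"
    then consider "m \<ge> Suc k" | "Suc m \<le> k" by linarith
    then show False
    proof cases
      case 1
      then have "real m * \<gamma> \<ge> real (Suc k) * \<gamma>" using g by (intro mult_right_mono) auto
      then show False using m(3) x(2) unfolding abs_less_iff by linarith
    next
      case 2
      then have "real (Suc m) * \<gamma> \<le> real k * \<gamma>" using g by (intro mult_right_mono) auto
      moreover have "real (Suc m) * \<gamma> = real m * \<gamma> + \<gamma>" by (simp add: algebra_simps)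
      ultimately show False using m(3) x(1) g unfolding abs_less_iff by linarith
    qed
  qed
  then show "coprime k (Pp \<gamma>) \<and> \<bar>x - real k * \<gamma>\<bar> < 1/2" using m by simp
next
  assume "coprime k (Pp \<gamma>) \<and> \<bar>x - real k * \<gamma>\<bar> < 1/2"
  then show "x \<in> Nset \<gamma>" unfolding Nset_iff using k by blast
qed

lemma base_mem:
  assumes g: "\<gamma> \<ge> 1" and x: "x \<le> \<gamma> - 1/2"
  shows "x \<notin> Nset \<gamma>"
proof
  assume "x \<in> Nset \<gamma>"
  then obtain m where m: "m \<ge> 1" "coprime m (Pp \<gamma>)" "\<bar>x - real m * \<gamma>\<bar> < 1/2" unfolding Nset_iff by blast
  have "real m * \<gamma> \<ge> 1 * \<gamma>" using g m(1) by (intro mult_right_mono) auto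
  then show False using m(3) x unfolding abs_less_iff by linarith
qed

lemma window_int:
  assumes g: "\<gamma> \<ge> 1" and k: "k \<ge> 1"
  shows "integral {real k * \<gamma> - 1/2..real (Suc k) * \<gamma> - 1/2} (indicator (Nset \<gamma> \<inter> U) :: real \<Rightarrow> real)
       = (if coprime k (Pp \<gamma>) then integral {real k * \<gamma> - 1/2..real k * \<gamma> + 1/2} (indicator U) else 0)"
proof -
  define W where "W = {real k * \<gamma> - 1/2..real (Suc k) * \<gamma> - 1/2}"
  define I where "I = {real k * \<gamma> - 1/2<..<real k * \<gamma> + 1/2}"
  define c where "c = coprime k (Pp \<gamma>)"
  define f where "f = (\<lambda>x. if c then indicator U x else (0::real))"
  have "integral W (indicator (Nset \<gamma> \<inter> U) :: real \<Rightarrow> real) = integral W (\<lambda>x. if x \<in> I then f x else 0)"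
  proof (rule integral_cong)
    fix x assume "x \<in> W"
    then have e: "x \<in> Nset \<gamma> \<longleftrightarrow> c \<and> x \<in> I"
      using window_mem[OF g k, of x] unfolding W_def c_def I_def ival_iff by auto
    show "indicator (Nset \<gamma> \<inter> U) x = (if x \<in> I then f x else 0)"
      unfolding f_def using e by (auto simp: indicator_def)
  qed
  also have "\<dots> = integral (I \<inter> W) f" by (rule integral_restrict_Int)
  also have "I \<inter> W = I"
  proof -
    have "real (Suc k) * \<gamma> = real k * \<gamma> + \<gamma>" by (simp add: algebra_simps)
    then show ?thesis unfolding I_def W_def using g by auto
  qed
  also have "integral I f = integral {real k * \<gamma> - 1/2..real k * \<gamma> + 1/2} f"
    unfolding I_def by (rule integral_open_interval_real[symmetric])
  finally have eq: "integral W (indicator (Nset \<gamma> \<inter> U) :: real \<Rightarrow> real) = integral {real k * \<gamma> - 1/2..real k * \<gamma> + 1/2} f" .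
  show ?thesis
  proof (cases c)
    case True
    then have "f = indicator U" unfolding f_def by auto
    then show ?thesis using eq True unfolding W_def c_def by simp
  next
    case False
    then have "f = (\<lambda>x. 0)" unfolding f_def by auto
    then show ?thesis using eq False unfolding W_def c_def by simp
  qed
qed

lemma base_int:
  assumes g: "\<gamma> \<ge> 1"
  shows "integral {0..\<gamma> - 1/2} (indicator (Nset \<gamma> \<inter> U) :: real \<Rightarrow> real) = 0"
proof -
  have "integral {0..\<gamma> - 1/2} (indicator (Nset \<gamma> \<inter> U) :: real \<Rightarrow> real) = integral {0..\<gamma> - 1/2} (\<lambda>x. 0)"
    by (rule integral_cong) (use base_mem[OF g] in \<open>auto simp: indicator_def\<close>)
  then show ?thesis by simp
qed

lemma windows_sum:
  fixes h :: "real \<Rightarrow> real"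
  assumes a: "a \<ge> 1" and hint: "\<And>x y. h integrable_on {x..y}"
  shows "integral {0..real (Suc N) * a - 1/2} h = integral {0..a - 1/2} h
          + (\<Sum>n<N. integral {real (Suc n) * a - 1/2..real (Suc (Suc n)) * a - 1/2} h)"
proof (induction N)
  case 0
  then show ?case by simp
next
  case (Suc N)
  have "real (Suc N) * a \<ge> 1 * a" using a by (intro mult_right_mono) auto
  then have 1: "0 \<le> real (Suc N) * a - 1/2" using a by linarith
  have 2: "real (Suc N) * a - 1/2 \<le> real (Suc (Suc N)) * a - 1/2" using a by (simp add: algebra_simps)
  have "integral {0..real (Suc (Suc N)) * a - 1/2} h = integral {0..real (Suc N) * a - 1/2} h
        + integral {real (Suc N) * a - 1/2..real (Suc (Suc N)) * a - 1/2} h"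
    by (rule Henstock_Kurzweil_Integration.integral_combine[OF 1 2 hint, symmetric])
  then show ?case using Suc.IH by simp
qed

lemma ind_int_bounds:
  fixes a b :: real
  assumes "open S" "a \<le> b"
  shows "0 \<le> integral {a..b} (indicator S :: real \<Rightarrow> real)" "integral {a..b} (indicator S :: real \<Rightarrow> real) \<le> b - a"
proof -
  show "0 \<le> integral {a..b} (indicator S :: real \<Rightarrow> real)"
    by (rule integral_nonneg[OF ind_integrable[OF assms(1)]]) simp
  have "integral {a..b} (indicator S :: real \<Rightarrow> real) \<le> integral {a..b} (\<lambda>x. 1::real)"
    by (rule integral_le[OF ind_integrable[OF assms(1)]]) (auto simp: indicator_def)
  then show "integral {a..b} (indicator S :: real \<Rightarrow> real) \<le> b - a" using assms(2) by simp
qed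

definition Gh :: "real \<Rightarrow> real \<Rightarrow> real" where
  "Gh \<beta> x = integral {x - 1/2..x + 1/2} (indicator (Nper \<beta>) :: real \<Rightarrow> real)"

lemma Gh_per: "Gh \<beta> (x + real (Pp \<beta>) * \<beta>) = Gh \<beta> x"
proof -
  define B where "B = real (Pp \<beta>) * \<beta>"
  have sh: "integral {(x - 1/2) + B - B..(x + 1/2) + B - B} (\<lambda>y. (indicator (Nper \<beta>) :: real \<Rightarrow> real) (y + B))
     = integral {(x - 1/2) + B..(x + 1/2) + B} (indicator (Nper \<beta>) :: real \<Rightarrow> real)"
    by (rule integral_shift_real_ivl)
  have i1: "{(x - 1/2) + B - B..(x + 1/2) + B - B} = {x - 1/2..x + 1/2}" by simp
  have i2: "{(x - 1/2) + B..(x + 1/2) + B} = {x + B - 1/2..x + B + 1/2}" by (simp add: algebra_simps)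
  have "Gh \<beta> (x + B) = integral {x - 1/2..x + 1/2} (\<lambda>y. (indicator (Nper \<beta>) :: real \<Rightarrow> real) (y + B))"
    unfolding Gh_def using sh unfolding i1 i2 by simp
  also have "\<dots> = integral {x - 1/2..x + 1/2} (indicator (Nper \<beta>) :: real \<Rightarrow> real)"
    by (rule integral_cong) (simp add: indicator_def B_def Nper_per)
  finally show ?thesis unfolding B_def Gh_def .
qed

lemma Gh_bounds: "0 \<le> Gh \<beta> x" "Gh \<beta> x \<le> 1"
  using ind_int_bounds[OF open_Nper, of "x - 1/2" "x + 1/2" \<beta>] unfolding Gh_def by auto

lemma Gh_lip: "\<bar>Gh \<beta> x - Gh \<beta> y\<bar> \<le> 1 * \<bar>x - y\<bar>"
proof -
  have main: "\<bar>Gh \<beta> x - Gh \<beta> y\<bar> \<le> \<bar>x - y\<bar>" if xy: "x \<le> y" for x y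
  proof (cases "y - x \<ge> 1")
    case True
    then show ?thesis using Gh_bounds[of \<beta> x] Gh_bounds[of \<beta> y] by linarith
  next
    case False
    define I where "I a b = integral {a..b} (indicator (Nper \<beta>) :: real \<Rightarrow> real)" for a b
    have int: "(indicator (Nper \<beta>) :: real \<Rightarrow> real) integrable_on {a..b}" for a b by (rule ind_integrable[OF open_Nper])
    have gx: "Gh \<beta> x = I (x - 1/2) (y - 1/2) + I (y - 1/2) (x + 1/2)"
      unfolding Gh_def I_def by (rule Henstock_Kurzweil_Integration.integral_combine[symmetric]) (use xy False int in auto)
    have gy: "Gh \<beta> y = I (y - 1/2) (x + 1/2) + I (x + 1/2) (y + 1/2)"
      unfolding Gh_def I_def by (rule Henstock_Kurzweil_Integration.integral_combine[symmetric]) (use xy False int in auto)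
    have b1: "0 \<le> I (x - 1/2) (y - 1/2)" "I (x - 1/2) (y - 1/2) \<le> y - x"
      using ind_int_bounds[OF open_Nper, of "x - 1/2" "y - 1/2" \<beta>] xy unfolding I_def by auto
    have b2: "0 \<le> I (x + 1/2) (y + 1/2)" "I (x + 1/2) (y + 1/2) \<le> y - x"
      using ind_int_bounds[OF open_Nper, of "x + 1/2" "y + 1/2" \<beta>] xy unfolding I_def by auto
    show ?thesis unfolding gx gy using b1 b2 xy by linarith
  qed
  show ?thesis
  proof (cases "x \<le> y")
    case True then show ?thesis using main by simp
  next
    case False then show ?thesis using main[of y x] by (simp add: abs_minus_commute)
  qed
qed

lemma c_over_T: "((\<lambda>T::real. c / T) \<longlongrightarrow> 0) at_top"
  by (rule tendsto_divide_0[OF tendsto_const filterlim_at_top_imp_at_infinity[OF filterlim_ident]])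

lemma T_conv:
  fixes h :: "real \<Rightarrow> real" and a \<sigma> :: real
  assumes a: "a \<ge> 1" and hint: "\<And>x y. h integrable_on {x..y}" and h0: "\<And>x. 0 \<le> h x" and h1: "\<And>x. h x \<le> 1"
    and lim: "(\<lambda>N. integral {0..real (Suc N) * a - 1/2} h / real N) \<longlonglongrightarrow> \<sigma>"
  shows "((\<lambda>T. integral {0..T} h / T) \<longlongrightarrow> \<sigma> / a) at_top"
proof -
  define S where "S N = integral {0..real (Suc N) * a - 1/2} h" for N
  define n where "n T = nat \<lfloor>(T + 1/2) / a\<rfloor> - 1" for T
  have nb: "real (Suc (n T)) * a - 1/2 \<le> T \<and> T < real (Suc (n T)) * a + a - 1/2
          \<and> (T + 1/2) / a - 2 < real (n T) \<and> real (n T) \<le> (T + 1/2) / a - 1" if T: "T \<ge> a" for T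
  proof -
    define f where "f = \<lfloor>(T + 1/2) / a\<rfloor>"
    have "(T + 1/2) / a \<ge> 1" using T a by (simp add: le_divide_eq)
    then have f1: "f \<ge> 1" unfolding f_def by linarith
    have rs: "real (Suc (n T)) = of_int f" using f1 unfolding n_def f_def by (simp add: of_nat_diff)
    have f2: "of_int f \<le> (T + 1/2) / a" "(T + 1/2) / a < of_int f + 1" unfolding f_def by linarith+
    have f3: "of_int f * a \<le> T + 1/2" using f2(1) a by (simp add: le_divide_eq)
    have f4: "T + 1/2 < (of_int f + 1) * a" using f2(2) a by (simp add: divide_less_eq)
    show ?thesis unfolding rs using f2 f3 f4 rs by (simp add: algebra_simps)
  qed
  have nlim: "filterlim n at_top at_top"
    unfolding filterlim_at_top
  proof
    fix Z :: nat
    have "eventually (\<lambda>T. T \<ge> max a ((real Z + 2) * a)) at_top" by (rule eventually_ge_at_top)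
    then show "eventually (\<lambda>T. Z \<le> n T) at_top"
    proof (rule eventually_mono)
      fix T assume T: "max a ((real Z + 2) * a) \<le> T"
      then have "(real Z + 2) * a \<le> T + 1/2" by linarith
      then have "real Z + 2 \<le> (T + 1/2) / a" using a by (simp add: le_divide_eq)
      then show "Z \<le> n T" using nb[of T] T by linarith
    qed
  qed
  have l1: "((\<lambda>T. S (n T) / real (n T)) \<longlongrightarrow> \<sigma>) at_top"
    using filterlim_compose[OF lim nlim] unfolding S_def by simp
  have l2: "((\<lambda>T. real (n T) / T) \<longlongrightarrow> 1 / a) at_top"
  proof -
    have "((\<lambda>T. (real (n T) - T / a) / T) \<longlongrightarrow> 0) at_top"
    proof (rule Lim_null_comparison[OF _ c_over_T[of 3]])
      have "eventually (\<lambda>T. T \<ge> a) at_top" by (rule eventually_ge_at_top)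
      then show "eventually (\<lambda>T. norm ((real (n T) - T / a) / T) \<le> 3 / T) at_top"
      proof (rule eventually_mono)
        fix T assume T: "T \<ge> a"
        have e: "(T + 1/2) / a = T / a + 1 / (2 * a)" by (simp add: add_divide_distrib)
        have "1 / (2 * a) \<le> 1" using a by simp
        moreover have "1 / (2 * a) > 0" using a by simp
        ultimately have "\<bar>real (n T) - T / a\<bar> \<le> 3" using nb[OF T] unfolding e by linarith
        then show "norm ((real (n T) - T / a) / T) \<le> 3 / T" using T a
          by (simp add: abs_divide divide_right_mono)
      qed
    qed
    then have "((\<lambda>T. 1 / a + (real (n T) - T / a) / T) \<longlongrightarrow> 1 / a + 0) at_top"
      by (intro tendsto_add tendsto_const)
    moreover have "eventually (\<lambda>T. 1 / a + (real (n T) - T / a) / T = real (n T) / T) at_top"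
      using eventually_ge_at_top[of a]
    proof (rule eventually_mono)
      fix T assume "a \<le> T"
      then have "T \<noteq> 0" using a by simp
      then show "1 / a + (real (n T) - T / a) / T = real (n T) / T" by (simp add: diff_divide_distrib)
    qed
    ultimately show ?thesis using tendsto_cong by fastforce
  qed
  have l3: "((\<lambda>T. (integral {0..T} h - S (n T)) / T) \<longlongrightarrow> 0) at_top"
  proof (rule Lim_null_comparison[OF _ c_over_T[of a]])
    show "eventually (\<lambda>T. norm ((integral {0..T} h - S (n T)) / T) \<le> a / T) at_top"
      using eventually_ge_at_top[of a]
    proof (rule eventually_mono)
      fix T assume T: "a \<le> T"
      define c where "c = real (Suc (n T)) * a - 1/2"
      have "real (Suc (n T)) * a \<ge> 1 * a" using a by (intro mult_right_mono) auto
      then have c0: "0 \<le> c" using a unfolding c_def by linarith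
      have cT: "c \<le> T" "T - c < a" using nb[OF T] unfolding c_def by auto
      have "integral {0..T} h = S (n T) + integral {c..T} h"
        unfolding S_def c_def[symmetric]
        by (rule Henstock_Kurzweil_Integration.integral_combine[symmetric, OF c0 cT(1) hint])
      moreover have "0 \<le> integral {c..T} h" by (rule integral_nonneg[OF hint h0])
      moreover have "integral {c..T} h \<le> integral {c..T} (\<lambda>x. 1)" by (rule integral_le[OF hint _ h1]) (rule integrable_const_ivl)
      ultimately have "\<bar>integral {0..T} h - S (n T)\<bar> \<le> a" using cT by simp
      then show "norm ((integral {0..T} h - S (n T)) / T) \<le> a / T" using T a
        by (simp add: abs_divide divide_right_mono)
    qed
  qed
  have "((\<lambda>T. S (n T) / real (n T) * (real (n T) / T) + (integral {0..T} h - S (n T)) / T) \<longlongrightarrow> \<sigma> * (1 / a) + 0) at_top"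
    by (intro tendsto_add tendsto_mult l1 l2 l3)
  moreover have "eventually (\<lambda>T. S (n T) / real (n T) * (real (n T) / T) + (integral {0..T} h - S (n T)) / T
                 = integral {0..T} h / T) at_top"
    using eventually_ge_at_top[of "3 * a"]
  proof (rule eventually_mono)
    fix T assume T: "3 * a \<le> T"
    then have Ta: "T \<ge> a" "T \<noteq> 0" using a by auto
    have "3 \<le> T / a" using T a by (simp add: le_divide_eq)
    moreover have "(T + 1/2) / a \<ge> T / a" using a Ta by (simp add: divide_right_mono)
    ultimately have "real (n T) > 0" using nb[OF Ta(1)] by linarith
    then show "S (n T) / real (n T) * (real (n T) / T) + (integral {0..T} h - S (n T)) / T = integral {0..T} h / T"
      using Ta by (simp add: field_simps)
  qed
  ultimately show ?thesis using tendsto_cong by fastforce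
qed

lemma PT_integral:
  assumes "open S"
  shows "PT T S = integral {0..T} (indicator S :: real \<Rightarrow> real) / T"
proof -
  have "{0..T} \<inter> S \<in> lmeasurable"
    by (rule fmeasurable_Int_fmeasurable) (use assms in auto)
  then have "S \<inter> {0..T} \<in> lmeasurable" by (simp add: Int_commute)
  then show ?thesis unfolding PT_def by (simp add: integral_indicator)
qed

lemma wav_lim:
  fixes w :: "nat \<Rightarrow> real"
  assumes P: "P > 0" and wper: "\<And>n. w (n + P) = w n" and w0: "\<And>n. 0 \<le> w n" and w1: "\<And>n. w n \<le> 1"
  shows "wav w \<longlonglongrightarrow> (\<Sum>n<P. w n) / real P"
proof -
  define s where "s N = (\<Sum>n<N. w n)" for N
  define W where "W = s P"
  have shiftP: "(\<Sum>n<P. w (N + n)) = W" for N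
  proof (induction N)
    case 0 then show ?case by (simp add: W_def s_def)
  next
    case (Suc N)
    have "(\<Sum>n<Suc P. w (N + n)) = w (N + 0) + (\<Sum>n<P. w (N + Suc n))" by (rule sum.lessThan_Suc_shift)
    moreover have "(\<Sum>n<Suc P. w (N + n)) = (\<Sum>n<P. w (N + n)) + w (N + P)" by simp
    moreover have "w (N + P) = w N" by (rule wper)
    ultimately have "(\<Sum>n<P. w (N + Suc n)) = (\<Sum>n<P. w (N + n))" by simp
    then show ?case using Suc.IH by simp
  qed
  have sq: "s (q * P + r) = real q * W + s r" for q r
  proof (induction q)
    case 0 then show ?case by simp
  next
    case (Suc q)
    have "s (Suc q * P + r) = s ((q * P + r) + P)" by (simp add: algebra_simps)
    also have "\<dots> = s (q * P + r) + (\<Sum>n<P. w (q * P + r + n))" unfolding s_def by (rule sum_split_add)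
    also have "\<dots> = s (q * P + r) + W" by (simp add: shiftP)
    finally show ?case using Suc.IH by (simp add: algebra_simps)
  qed
  have s_bounds: "0 \<le> s r \<and> s r \<le> real r" for r
  proof -
    have "0 \<le> s r" unfolding s_def by (intro sum_nonneg w0)
    moreover have "s r \<le> (\<Sum>n<r. 1)" unfolding s_def by (intro sum_mono w1)
    ultimately show ?thesis by simp
  qed
  have WP: "0 \<le> W" "W \<le> real P" using s_bounds[of P] unfolding W_def by auto
  have bound: "\<bar>wav w N - W / real P\<bar> \<le> real P / real N" if N: "N > 0" for N
  proof -
    define q where "q = N div P"
    define r where "r = N mod P"
    have Nqr: "N = q * P + r" unfolding q_def r_def by simp
    have rP: "r < P" unfolding r_def using P by simp
    have "s N - real N * W / real P = s r - real r * W / real P"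
      unfolding Nqr sq using P by (simp add: algebra_simps add_divide_distrib)
    moreover have "0 \<le> real r * W / real P" using WP by simp
    moreover have "real r * W / real P \<le> real P"
    proof -
      have "real r * W \<le> real P * real P" using rP WP by (intro mult_mono) auto
      then show ?thesis using P by (simp add: divide_le_eq)
    qed
    moreover have "s r \<le> real P" using s_bounds[of r] rP by simp
    ultimately have "\<bar>s N - real N * W / real P\<bar> \<le> real P" using s_bounds[of r] by linarith
    moreover have "wav w N - W / real P = (s N - real N * W / real P) / real N"
      using N P by (simp add: wav_def s_def field_simps)
    ultimately show ?thesis using N by (simp add: abs_divide divide_right_mono)
  qed
  have "(\<lambda>N. wav w N - W / real P) \<longlonglongrightarrow> 0"
  proof (rule Lim_null_comparison[OF _ lim_const_over_n[of "real P"]])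
    show "eventually (\<lambda>N. norm (wav w N - W / real P) \<le> real P / real N) sequentially"
      using eventually_gt_at_top[of "0::nat"] by (rule eventually_mono) (use bound in simp)
  qed
  then have "(\<lambda>N. (wav w N - W / real P) + W / real P) \<longlonglongrightarrow> 0 + W / real P"
    by (intro tendsto_add tendsto_const)
  then show ?thesis unfolding W_def s_def by simp
qed

lemma T_conv_ind:
  assumes a: "a \<ge> 1" and S: "open S"
    and lim: "(\<lambda>N. integral {0..real (Suc N) * a - 1/2} (indicator S :: real \<Rightarrow> real) / real N) \<longlonglongrightarrow> \<sigma>"
  shows "((\<lambda>T. PT T S) \<longlongrightarrow> \<sigma> / a) at_top"
  unfolding PT_integral[OF S]
  by (rule T_conv[OF a ind_integrable[OF S] _ _ lim]) (auto simp: indicator_def)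

definition wg :: "real \<Rightarrow> nat \<Rightarrow> real" where
  "wg \<gamma> n = (if coprime (Suc n) (Pp \<gamma>) then 1 else 0)"

lemma wg_per: "wg \<gamma> (n + Pp \<gamma>) = wg \<gamma> n"
proof -
  have "coprime (Suc n + Pp \<gamma>) (Pp \<gamma>) \<longleftrightarrow> coprime (Suc n) (Pp \<gamma>)"
    by (metis coprime_iff_gcd_eq_1 gcd_add1)
  then show ?thesis unfolding wg_def by simp
qed

lemma wg01: "0 \<le> wg \<gamma> n" "wg \<gamma> n \<le> 1" unfolding wg_def by auto

lemma wg_avg_pos: "(\<Sum>n<Pp \<gamma>. wg \<gamma> n) / real (Pp \<gamma>) > 0"
proof -
  have "wg \<gamma> 0 \<le> (\<Sum>n<Pp \<gamma>. wg \<gamma> n)"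
    using Pp_pos[of \<gamma>] by (intro member_le_sum) (auto simp: wg01)
  moreover have "wg \<gamma> 0 = 1" by (simp add: wg_def)
  ultimately show ?thesis using Pp_pos[of \<gamma>] by simp
qed

lemma windows_Nset:
  assumes g: "\<gamma> \<ge> 1" and U: "open U"
  shows "integral {0..real (Suc N) * \<gamma> - 1/2} (indicator (Nset \<gamma> \<inter> U) :: real \<Rightarrow> real)
         = (\<Sum>n<N. wg \<gamma> n * integral {real (Suc n) * \<gamma> - 1/2..real (Suc n) * \<gamma> + 1/2} (indicator U))"
proof -
  have hint: "(indicator (Nset \<gamma> \<inter> U) :: real \<Rightarrow> real) integrable_on {x..y}" for x y
    by (rule ind_integrable) (use open_Nset U in auto)
  have "(\<Sum>n<N. integral {real (Suc n) * \<gamma> - 1/2..real (Suc (Suc n)) * \<gamma> - 1/2} (indicator (Nset \<gamma> \<inter> U) :: real \<Rightarrow> real))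
     = (\<Sum>n<N. wg \<gamma> n * integral {real (Suc n) * \<gamma> - 1/2..real (Suc n) * \<gamma> + 1/2} (indicator U))"
  proof (rule sum.cong[OF refl])
    fix n
    show "integral {real (Suc n) * \<gamma> - 1/2..real (Suc (Suc n)) * \<gamma> - 1/2} (indicator (Nset \<gamma> \<inter> U) :: real \<Rightarrow> real)
          = wg \<gamma> n * integral {real (Suc n) * \<gamma> - 1/2..real (Suc n) * \<gamma> + 1/2} (indicator U)"
    proof -
      have wi: "integral {real (Suc n) * \<gamma> - 1/2..real (Suc (Suc n)) * \<gamma> - 1/2} (indicator (Nset \<gamma> \<inter> U) :: real \<Rightarrow> real)
        = (if coprime (Suc n) (Pp \<gamma>) then integral {real (Suc n) * \<gamma> - 1/2..real (Suc n) * \<gamma> + 1/2} (indicator U) else 0)"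
        by (rule window_int[OF g]) simp
      show ?thesis unfolding wi wg_def by simp
    qed
  qed
  then show ?thesis
    unfolding windows_sum[OF g hint] base_int[OF g] by simp
qed

lemma single_lim:
  assumes g: "\<gamma> \<ge> 1"
  shows "((\<lambda>T. PT T (Nset \<gamma>)) \<longlongrightarrow> ((\<Sum>n<Pp \<gamma>. wg \<gamma> n) / real (Pp \<gamma>)) / \<gamma>) at_top"
proof (rule T_conv_ind[OF g open_Nset])
  have "integral {0..real (Suc N) * \<gamma> - 1/2} (indicator (Nset \<gamma>) :: real \<Rightarrow> real) / real N = wav (wg \<gamma>) N" for N
  proof -
    have "integral {0..real (Suc N) * \<gamma> - 1/2} (indicator (Nset \<gamma>) :: real \<Rightarrow> real)
        = integral {0..real (Suc N) * \<gamma> - 1/2} (indicator (Nset \<gamma> \<inter> UNIV) :: real \<Rightarrow> real)" by simp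
    also have "\<dots> = (\<Sum>n<N. wg \<gamma> n)" unfolding windows_Nset[OF g open_UNIV] by simp
    finally show ?thesis by (simp add: wav_def)
  qed
  then show "(\<lambda>N. integral {0..real (Suc N) * \<gamma> - 1/2} (indicator (Nset \<gamma>) :: real \<Rightarrow> real) / real N)
      \<longlonglongrightarrow> (\<Sum>n<Pp \<gamma>. wg \<gamma> n) / real (Pp \<gamma>)"
    using wav_lim[where w="wg \<gamma>" and P="Pp \<gamma>", OF Pp_pos wg_per wg01] by simp
qed

lemma irr_mult:
  fixes q x :: real
  assumes "x \<notin> \<rat>" "q \<in> \<rat>" "q \<noteq> 0"
  shows "q * x \<notin> \<rat>"
proof
  assume "q * x \<in> \<rat>"
  then have "(q * x) / q \<in> \<rat>" using assms(2) by (rule Rats_divide)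
  then show False using assms by simp
qed

lemma Nset_Gh:
  assumes b: "\<beta> \<ge> 1" and x: "x \<ge> 1"
  shows "integral {x - 1/2..x + 1/2} (indicator (Nset \<beta>) :: real \<Rightarrow> real) = Gh \<beta> x"
  unfolding Gh_def
proof (rule integral_cong)
  fix y assume "y \<in> {x - 1/2..x + 1/2}"
  then have "y \<ge> 1/2" using x by auto
  then show "(indicator (Nset \<beta>) y :: real) = indicator (Nper \<beta>) y"
    using Nset_Nper[OF b] by (simp add: indicator_def)
qed

lemma inter_lim:
  assumes a: "\<alpha> \<ge> 1" and b: "\<beta> \<ge> 1" and irr: "(real (Pp \<alpha>) * \<alpha>) / (real (Pp \<beta>) * \<beta>) \<notin> \<rat>"
  shows "((\<lambda>T. PT T (Nset \<alpha> \<inter> Nset \<beta>)) \<longlongrightarrow>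
     ((\<Sum>n<Pp \<alpha>. wg \<alpha> n) / real (Pp \<alpha>) * lim (\<lambda>R. Rie (Gh \<beta>) (real (Pp \<beta>) * \<beta>) R 0)) / \<alpha>) at_top"
proof (rule T_conv_ind[OF a open_Int[OF open_Nset open_Nset]])
  define \<mu> where "\<mu> = lim (\<lambda>R. Rie (Gh \<beta>) (real (Pp \<beta>) * \<beta>) R 0)"
  have eq: "integral {0..real (Suc N) * \<alpha> - 1/2} (indicator (Nset \<alpha> \<inter> Nset \<beta>) :: real \<Rightarrow> real) / real N
        = Mav (wg \<alpha>) (Gh \<beta>) \<alpha> N \<alpha>" for N
  proof -
    have "integral {0..real (Suc N) * \<alpha> - 1/2} (indicator (Nset \<alpha> \<inter> Nset \<beta>) :: real \<Rightarrow> real)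
       = (\<Sum>n<N. wg \<alpha> n * integral {real (Suc n) * \<alpha> - 1/2..real (Suc n) * \<alpha> + 1/2} (indicator (Nset \<beta>)))"
      by (rule windows_Nset[OF a open_Nset])
    also have "\<dots> = (\<Sum>n<N. wg \<alpha> n * Gh \<beta> (\<alpha> + real n * \<alpha>))"
    proof (rule sum.cong[OF refl])
      fix n
      have "real (Suc n) * \<alpha> \<ge> 1 * 1" using a by (intro mult_mono) auto
      then have int: "integral {real (Suc n) * \<alpha> - 1/2..real (Suc n) * \<alpha> + 1/2} (indicator (Nset \<beta>) :: real \<Rightarrow> real)
          = Gh \<beta> (real (Suc n) * \<alpha>)" by (intro Nset_Gh[OF b]) simp
      have e: "real (Suc n) * \<alpha> = \<alpha> + real n * \<alpha>" by (simp add: algebra_simps)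
      show "wg \<alpha> n * integral {real (Suc n) * \<alpha> - 1/2..real (Suc n) * \<alpha> + 1/2} (indicator (Nset \<beta>))
          = wg \<alpha> n * Gh \<beta> (\<alpha> + real n * \<alpha>)" unfolding int by (simp only: e)
    qed
    finally show ?thesis unfolding Mav_def by simp
  qed
  have B: "real (Pp \<beta>) * \<beta> > 0" using Pp_pos[of \<beta>] b by simp
  have Gb: "\<bar>Gh \<beta> x\<bar> \<le> 1" for x using Gh_bounds[of \<beta> x] by simp
  have w: "(\<lambda>N. Mav (wg \<alpha>) (Gh \<beta>) \<alpha> N \<alpha> - wav (wg \<alpha>) N * \<mu>) \<longlonglongrightarrow> 0"
    unfolding \<mu>_def
    by (rule weyl(2)[where w="wg \<alpha>" and G="Gh \<beta>" and P="Pp \<alpha>" and a=\<alpha> and B="real (Pp \<beta>) * \<beta>" and L=1 and C=1,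
          OF Pp_pos wg_per wg01 B Gh_per Gh_lip _ Gb irr]) simp
  have v: "wav (wg \<alpha>) \<longlonglongrightarrow> (\<Sum>n<Pp \<alpha>. wg \<alpha> n) / real (Pp \<alpha>)"
    using wav_lim[where w="wg \<alpha>" and P="Pp \<alpha>", OF Pp_pos wg_per wg01] .
  have "(\<lambda>N. (Mav (wg \<alpha>) (Gh \<beta>) \<alpha> N \<alpha> - wav (wg \<alpha>) N * \<mu>) + wav (wg \<alpha>) N * \<mu>)
        \<longlonglongrightarrow> 0 + (\<Sum>n<Pp \<alpha>. wg \<alpha> n) / real (Pp \<alpha>) * \<mu>"
    by (intro tendsto_add tendsto_mult w v tendsto_const)
  then show "(\<lambda>N. integral {0..real (Suc N) * \<alpha> - 1/2} (indicator (Nset \<alpha> \<inter> Nset \<beta>) :: real \<Rightarrow> real) / real N)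
      \<longlonglongrightarrow> (\<Sum>n<Pp \<alpha>. wg \<alpha> n) / real (Pp \<alpha>) * lim (\<lambda>R. Rie (Gh \<beta>) (real (Pp \<beta>) * \<beta>) R 0)"
    unfolding eq \<mu>_def by simp
qed

lemma beta1_lim:
  assumes b: "\<beta> \<ge> 1" and irr: "1 / (real (Pp \<beta>) * \<beta>) \<notin> \<rat>"
  shows "((\<lambda>T. PT T (Nset \<beta>)) \<longlongrightarrow> lim (\<lambda>R. Rie (Gh \<beta>) (real (Pp \<beta>) * \<beta>) R 0) / 1) at_top"
proof (rule T_conv_ind[OF order_refl open_Nset])
  define \<mu> where "\<mu> = lim (\<lambda>R. Rie (Gh \<beta>) (real (Pp \<beta>) * \<beta>) R 0)"
  have hint: "(indicator (Nset \<beta>) :: real \<Rightarrow> real) integrable_on {x..y}" for x y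
    by (rule ind_integrable[OF open_Nset])
  have base: "integral {0..1 - 1/2} (indicator (Nset \<beta>) :: real \<Rightarrow> real) = 0"
  proof -
    have "integral {0..1 - 1/2} (indicator (Nset \<beta>) :: real \<Rightarrow> real) = integral {0..1 - 1/2} (\<lambda>x::real. 0::real)"
      by (rule integral_cong) (use base_mem[OF b] b in \<open>auto simp: indicator_def\<close>)
    then show ?thesis by simp
  qed
  have eq: "integral {0..real (Suc N) * 1 - 1/2} (indicator (Nset \<beta>) :: real \<Rightarrow> real) / real N
        = Mav (\<lambda>_. 1) (Gh \<beta>) 1 N 1" for N
  proof -
    have "integral {0..real (Suc N) * 1 - 1/2} (indicator (Nset \<beta>) :: real \<Rightarrow> real)
       = (\<Sum>n<N. integral {real (Suc n) * 1 - 1/2..real (Suc (Suc n)) * 1 - 1/2} (indicator (Nset \<beta>) :: real \<Rightarrow> real))"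
      using windows_sum[OF order_refl hint, of N] base by simp
    also have "\<dots> = (\<Sum>n<N. Gh \<beta> (1 + real n * 1))"
    proof (rule sum.cong[OF refl])
      fix n
      have "integral {(1 + real n) - 1/2..(1 + real n) + 1/2} (indicator (Nset \<beta>) :: real \<Rightarrow> real) = Gh \<beta> (1 + real n)"
        by (rule Nset_Gh[OF b]) simp
      moreover have "real (Suc n) * 1 - 1/2 = (1 + real n) - 1/2" "real (Suc (Suc n)) * 1 - 1/2 = (1 + real n) + 1/2"
        by simp_all
      ultimately show "integral {real (Suc n) * 1 - 1/2..real (Suc (Suc n)) * 1 - 1/2} (indicator (Nset \<beta>) :: real \<Rightarrow> real)
          = Gh \<beta> (1 + real n * 1)" by simp
    qed
    finally show ?thesis unfolding Mav_def by simp
  qed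
  have B: "real (Pp \<beta>) * \<beta> > 0" using Pp_pos[of \<beta>] b by simp
  have Gb: "\<bar>Gh \<beta> x\<bar> \<le> 1" for x using Gh_bounds[of \<beta> x] by simp
  have irr': "real 1 * 1 / (real (Pp \<beta>) * \<beta>) \<notin> \<rat>" using irr by simp
  have w: "(\<lambda>N. Mav (\<lambda>_. 1) (Gh \<beta>) 1 N 1 - wav (\<lambda>_. 1) N * \<mu>) \<longlonglongrightarrow> 0"
    unfolding \<mu>_def
    by (rule weyl(2)[where w="\<lambda>_. 1" and G="Gh \<beta>" and P=1 and a=1 and B="real (Pp \<beta>) * \<beta>" and L=1 and C=1,
          OF _ _ _ _ B Gh_per Gh_lip _ Gb irr']) simp_all
  have v: "wav (\<lambda>_. 1) \<longlonglongrightarrow> 1"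
    using wav_lim[where w="\<lambda>_. 1" and P=1] by simp
  have "(\<lambda>N. (Mav (\<lambda>_. 1) (Gh \<beta>) 1 N 1 - wav (\<lambda>_. 1) N * \<mu>) + wav (\<lambda>_. 1) N * \<mu>) \<longlonglongrightarrow> 0 + 1 * \<mu>"
    by (intro tendsto_add tendsto_mult w v tendsto_const)
  then show "(\<lambda>N. integral {0..real (Suc N) * 1 - 1/2} (indicator (Nset \<beta>) :: real \<Rightarrow> real) / real N)
      \<longlonglongrightarrow> lim (\<lambda>R. Rie (Gh \<beta>) (real (Pp \<beta>) * \<beta>) R 0)"
    unfolding eq \<mu>_def by simp
qed

lemma main_case:
  fixes \<alpha> \<beta> :: real
  assumes a: "\<alpha> \<ge> 1" and b: "\<beta> \<ge> 1" and irr: "\<alpha> / \<beta> \<notin> \<rat>" and birr: "\<beta> \<notin> \<rat>"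
  shows "(\<lambda>T. PT T (Nset \<alpha> \<inter> Nset \<beta>)) \<sim>[at_top] (\<lambda>T. PT T (Nset \<alpha>) * PT T (Nset \<beta>))"
proof -
  define ca where "ca = (\<Sum>n<Pp \<alpha>. wg \<alpha> n) / real (Pp \<alpha>)"
  define cb where "cb = (\<Sum>n<Pp \<beta>. wg \<beta> n) / real (Pp \<beta>)"
  define \<mu> where "\<mu> = lim (\<lambda>R. Rie (Gh \<beta>) (real (Pp \<beta>) * \<beta>) R 0)"
  have ca: "ca > 0" unfolding ca_def by (rule wg_avg_pos)
  have cb: "cb > 0" unfolding cb_def by (rule wg_avg_pos)
  have Pa: "real (Pp \<alpha>) > 0" "real (Pp \<beta>) > 0" using Pp_pos by auto
  have irr1: "(real (Pp \<alpha>) * \<alpha>) / (real (Pp \<beta>) * \<beta>) \<notin> \<rat>"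
  proof -
    have "(real (Pp \<alpha>) / real (Pp \<beta>)) * (\<alpha> / \<beta>) \<notin> \<rat>"
      by (rule irr_mult[OF irr]) (use Pa in \<open>auto intro: Rats_divide\<close>)
    then show ?thesis by simp
  qed
  have irr2: "1 / (real (Pp \<beta>) * \<beta>) \<notin> \<rat>"
  proof
    assume "1 / (real (Pp \<beta>) * \<beta>) \<in> \<rat>"
    then have "real (Pp \<beta>) * (1 / (real (Pp \<beta>) * \<beta>)) \<in> \<rat>" by (intro Rats_mult) auto
    then have "inverse \<beta> \<in> \<rat>" using Pa by (simp add: field_simps)
    then have "inverse (inverse \<beta>) \<in> \<rat>" by (rule Rats_inverse)
    then show False using birr by simp
  qed
  have hA: "((\<lambda>T. PT T (Nset \<alpha>)) \<longlongrightarrow> ca / \<alpha>) at_top" unfolding ca_def by (rule single_lim[OF a])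
  have hB: "((\<lambda>T. PT T (Nset \<beta>)) \<longlongrightarrow> cb / \<beta>) at_top" unfolding cb_def by (rule single_lim[OF b])
  have hB1: "((\<lambda>T. PT T (Nset \<beta>)) \<longlongrightarrow> \<mu> / 1) at_top" unfolding \<mu>_def by (rule beta1_lim[OF b irr2])
  have mu: "\<mu> = cb / \<beta>" using tendsto_unique[OF _ hB1 hB] by simp
  have hAB: "((\<lambda>T. PT T (Nset \<alpha> \<inter> Nset \<beta>)) \<longlongrightarrow> (ca * \<mu>) / \<alpha>) at_top"
    unfolding ca_def \<mu>_def by (rule inter_lim[OF a b irr1])
  have nz: "ca / \<alpha> * (cb / \<beta>) \<noteq> 0" using ca cb a b by simp
  have "((\<lambda>T. PT T (Nset \<alpha> \<inter> Nset \<beta>) / (PT T (Nset \<alpha>) * PT T (Nset \<beta>))) \<longlongrightarrow> ((ca * \<mu>) / \<alpha>) / (ca / \<alpha> * (cb / \<beta>))) at_top"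
    by (intro tendsto_divide tendsto_mult hAB hA hB nz)
  moreover have eq1: "((ca * \<mu>) / \<alpha>) / (ca / \<alpha> * (cb / \<beta>)) = 1"
  proof -
    have "ca \<noteq> 0" "cb \<noteq> 0" "\<alpha> \<noteq> 0" "\<beta> \<noteq> 0" using ca cb a b by auto
    then show ?thesis unfolding mu by (simp add: field_simps)
  qed
  ultimately have "((\<lambda>T. PT T (Nset \<alpha> \<inter> Nset \<beta>) / (PT T (Nset \<alpha>) * PT T (Nset \<beta>))) \<longlongrightarrow> 1) at_top"
    by (simp only:)
  then show ?thesis by (rule asymp_equivI')
qed

theorem lemma2p8:
  fixes \<alpha> \<beta> :: real
  assumes "\<alpha> \<ge> 1" and "\<beta> \<ge> 1" and "\<alpha> / \<beta> \<notin> \<rat>"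
  shows "(\<lambda>T. PT T (Nset \<alpha> \<inter> Nset \<beta>)) \<sim>[at_top] (\<lambda>T. PT T (Nset \<alpha>) * PT T (Nset \<beta>))"
proof (cases "\<beta> \<in> \<rat>")
  case False
  then show ?thesis using main_case[OF assms] by blast
next
  case True
  have airr: "\<alpha> \<notin> \<rat>"
  proof
    assume "\<alpha> \<in> \<rat>"
    then have "\<alpha> / \<beta> \<in> \<rat>" using True by (rule Rats_divide)
    then show False using assms(3) by simp
  qed
  have irr': "\<beta> / \<alpha> \<notin> \<rat>"
  proof
    assume "\<beta> / \<alpha> \<in> \<rat>"
    then have "inverse (\<beta> / \<alpha>) \<in> \<rat>" by (rule Rats_inverse)
    then show False using assms(3) by simp
  qed
  have "(\<lambda>T. PT T (Nset \<beta> \<inter> Nset \<alpha>)) \<sim>[at_top] (\<lambda>T. PT T (Nset \<beta>) * PT T (Nset \<alpha>))"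
    by (rule main_case[OF assms(2) assms(1) irr' airr])
  then show ?thesis by (simp add: Int_commute mult.commute)
qed

end
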